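(* Let $G\in M_n(R)$ be the matrix with $G_{i,i+n-2}=1$ for $i=1,2$, $G_{i,i-2}=x^2$ for $3\le i\le n$, and all other entries $0$, and let $\alpha$ be the automorphism $\alpha(\lambda)=G^{-1}\lambda G$ of $\Lambda$. Identify $\mathrm D_R\Lambda=\operatorname{Hom}_R(\Lambda,R)$ with $\{Y\in M_n(K(x)):\operatorname{tr}(Y\lambda)\in R\ \forall\lambda\in\Lambda\}$ via the trace pairing, so that the $\Lambda$-bimodule structure becomes matrix multiplication on both sides. Then $f:\Lambda\to\mathrm D_R\Lambda$, $\mu\mapsto\mu G^{-1}$, is an isomorphism of $\Lambda$-bimodules ${}_1\Lambda_\alpha\cong\mathrm D_R\Lambda$.
   Context: $K$ a field, $R=K[x]$, $n\ge3$. $\Lambda\subset M_n(K(x))$ is the $R$-order with $(i,j)$ entry $x^{c_{ij}}R$, $c_{ij}=0$ for $i\le j$ except $c_{1n}=-1$, $c_{ij}=1$ for $i=j+1$, $c_{ij}=2$ for $i\ge j+2$. For an algebra automorphism $\varsigma$ of $\Lambda$, ${}_1\Lambda_\varsigma$ denotes $\Lambda$ as a vector space with bimodule structure $a\cdot m\cdot b=am\varsigma(b)$. The bimodule $\operatorname{Hom}_R(\Lambda,R)$ has structure $(\lambda f\mu)(m)=f(\mu m\lambda)$. *)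

theory Defs
  imports "Jordan_Normal_Form.Matrix" "HOL-Computational_Algebra.Polynomial"
    "HOL-Computational_Algebra.Fraction_Field"
begin

(* R = K[x] is 'k poly, K(x) = 'k poly fract. Matrix indices are 0-based:
   paper index i corresponds to Isabelle index i-1. *)

definition embR :: "'k::field poly \<Rightarrow> 'k poly fract" where
  "embR r = Fract r 1"

definition Xf :: "'k::field poly fract" where
  "Xf = embR [:0, 1:]"

definition mat_trace :: "'a::comm_ring_1 mat \<Rightarrow> 'a" where
  "mat_trace A = (\<Sum>i<dim_row A. A $$ (i, i))"

definition cexp :: "nat \<Rightarrow> nat \<Rightarrow> nat \<Rightarrow> int" where
  "cexp n i j = (if i = 0 \<and> j = n - 1 then -1
                 else if i \<le> j then 0
                 else if i = j + 1 then 1 else 2)"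

definition Lam :: "nat \<Rightarrow> 'k::field poly fract mat set" where
  "Lam n = {M \<in> carrier_mat n n. \<forall>i<n. \<forall>j<n.
              \<exists>r. M $$ (i, j) = Xf powi (cexp n i j) * embR r}"

definition DLam :: "nat \<Rightarrow> 'k::field poly fract mat set" where
  "DLam n = {Y \<in> carrier_mat n n. \<forall>l\<in>Lam n. mat_trace (Y * l) \<in> range embR}"

definition Gmat :: "nat \<Rightarrow> 'k::field poly fract mat" where
  "Gmat n = mat n n (\<lambda>(i, j).
     if i < 2 \<and> j = i + n - 2 then 1
     else if 2 \<le> i \<and> j = i - 2 then Xf ^ 2 else 0)"

definition Ginv :: "nat \<Rightarrow> 'k::field poly fract mat" where
  "Ginv n = (THE H. H \<in> carrier_mat n n \<and> Gmat n * H = 1\<^sub>m n \<and> H * Gmat n = 1\<^sub>m n)"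

definition alpha :: "nat \<Rightarrow> 'k::field poly fract mat \<Rightarrow> 'k poly fract mat" where
  "alpha n l = Ginv n * l * Gmat n"

definition fmap :: "nat \<Rightarrow> 'k::field poly fract mat \<Rightarrow> 'k poly fract mat" where
  "fmap n m = m * Ginv n"

end

theory Submission
  imports Defs
begin

lemma embR_add: "embR (a + b) = embR a + embR b" by (simp add: embR_def)
lemma embR_mult: "embR (a * b) = embR a * embR b" by (simp add: embR_def)
lemma embR_0: "embR 0 = 0" by (simp add: embR_def Zero_fract_def)
lemma embR_1: "embR 1 = 1" by (simp add: embR_def One_fract_def)
lemma Xf_nz: "Xf \<noteq> (0::'k::field poly fract)"
  by (simp add: Xf_def embR_def Zero_fract_def eq_fract)

definition inS :: "int \<Rightarrow> 'k::field poly fract \<Rightarrow> bool" where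
  "inS c z \<longleftrightarrow> (\<exists>r. z = Xf powi c * embR r)"

lemma inS_0: "inS c 0" unfolding inS_def by (rule exI[of _ 0]) (simp add: embR_0)
lemma inS_add: "inS c a \<Longrightarrow> inS c b \<Longrightarrow> inS c (a + b)"
  unfolding inS_def by (metis distrib_left embR_add)
lemma inS_mult: "inS a x \<Longrightarrow> inS b y \<Longrightarrow> inS (a + b) (x * y)"
  unfolding inS_def
proof (elim exE)
  fix r s assume "x = Xf powi a * embR r" "y = Xf powi b * embR s"
  then show "\<exists>t. x * y = Xf powi (a + b) * embR t"
    by (intro exI[of _ "r * s"]) (simp add: power_int_add Xf_nz embR_mult algebra_simps)
qed
lemma inS_shift: "inS c z \<Longrightarrow> inS (k + c) (Xf powi k * z)"
  unfolding inS_def by (auto simp: power_int_add Xf_nz algebra_simps)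
lemma inS_unshift: "inS (k + c) (Xf powi k * z) \<Longrightarrow> inS c z"
proof -
  assume h: "inS (k + c) (Xf powi k * z)"
  have e: "Xf powi (-k) * (Xf powi k * z) = z"
    by (simp add: mult.assoc[symmetric] power_int_add[symmetric] Xf_nz)
  show ?thesis using inS_shift[OF h, of "-k"] by (simp add: e)
qed
lemma inS_range: "inS 0 z \<longleftrightarrow> z \<in> range embR"
  unfolding inS_def by auto
lemma inS_sum: "finite A \<Longrightarrow> (\<And>x. x \<in> A \<Longrightarrow> inS c (f x)) \<Longrightarrow> inS c (sum f A)"
  by (induction A rule: finite_induct) (auto intro: inS_0 inS_add)

definition sg :: "nat \<Rightarrow> nat \<Rightarrow> nat" where "sg n i = (if i + 2 < n then i + 2 else i + 2 - n)"
definition tg :: "nat \<Rightarrow> nat \<Rightarrow> nat" where "tg n i = (if i < 2 then i + n - 2 else i - 2)"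
definition ew :: "nat \<Rightarrow> nat \<Rightarrow> int" where "ew n i = (if i + 2 < n then 2 else 0)"

lemma cA: assumes "3 \<le> n" "i < n" "j < n"
  shows "cexp n (sg n i) (sg n j) + ew n j - ew n i = cexp n i j"
proof -
  have ci: "i + 2 < n \<or> i = n - 2 \<or> i = n - 1" using assms by linarith
  have cj: "j + 2 < n \<or> j = n - 2 \<or> j = n - 1" using assms by linarith
  from ci cj show ?thesis using assms
    by (elim disjE; simp add: cexp_def sg_def ew_def; linarith?)
qed
lemma cF: assumes "3 \<le> n" "i < n" "j < n"
  shows "cexp n i (tg n j) - ew n (tg n j) = - cexp n j i"
proof -
  have ci: "i + 2 < n \<or> i = n - 2 \<or> i = n - 1" using assms by linarith
  have cj: "j < 2 \<or> 2 \<le> j" by linarith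
  from ci cj show ?thesis using assms
    by (elim disjE; simp add: cexp_def tg_def ew_def; linarith?)
qed
lemma sg_lt: "3 \<le> n \<Longrightarrow> i < n \<Longrightarrow> sg n i < n" unfolding sg_def by auto
lemma tg_lt: "3 \<le> n \<Longrightarrow> i < n \<Longrightarrow> tg n i < n" unfolding tg_def by auto
lemma sg_tg: "3 \<le> n \<Longrightarrow> i < n \<Longrightarrow> sg n (tg n i) = i" unfolding sg_def tg_def by auto
lemma tg_sg: "3 \<le> n \<Longrightarrow> i < n \<Longrightarrow> tg n (sg n i) = i" unfolding sg_def tg_def by auto

lemma inS_shift': "inS c z \<Longrightarrow> d = k + c \<Longrightarrow> inS d (Xf powi k * z)"
  using inS_shift by blast

lemma Lam_iff: "M \<in> Lam n \<longleftrightarrow> M \<in> carrier_mat n n \<and> (\<forall>i<n. \<forall>j<n. inS (cexp n i j) (M $$ (i, j)))"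
  by (simp add: Lam_def inS_def)

lemma mult_left_perm:
  assumes "A \<in> carrier_mat n n" "M \<in> carrier_mat n m" "i < n" "j < m" "p < n"
    "\<And>k. k < n \<Longrightarrow> A $$ (i, k) = (if k = p then a else 0)"
  shows "(A * M) $$ (i, j) = a * M $$ (p, j)"
proof -
  have "(A * M) $$ (i, j) = (\<Sum>k\<in>{0..<n}. A $$ (i, k) * M $$ (k, j))"
    using assms by (simp add: scalar_prod_def)
  also have "\<dots> = (\<Sum>k\<in>{0..<n}. if k = p then a * M $$ (p, j) else 0)"
    by (rule sum.cong) (auto simp: assms(6))
  also have "\<dots> = a * M $$ (p, j)" using assms by simp
  finally show ?thesis .
qed

lemma mult_right_perm:
  assumes "M \<in> carrier_mat m n" "B \<in> carrier_mat n n" "i < m" "j < n" "q < n"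
    "\<And>k. k < n \<Longrightarrow> B $$ (k, j) = (if k = q then b else 0)"
  shows "(M * B) $$ (i, j) = M $$ (i, q) * b"
proof -
  have "(M * B) $$ (i, j) = (\<Sum>k\<in>{0..<n}. M $$ (i, k) * B $$ (k, j))"
    using assms by (simp add: scalar_prod_def)
  also have "\<dots> = (\<Sum>k\<in>{0..<n}. if k = q then M $$ (i, q) * b else 0)"
    by (rule sum.cong) (auto simp: assms(6))
  also have "\<dots> = M $$ (i, q) * b" using assms by simp
  finally show ?thesis .
qed

definition W :: "nat \<Rightarrow> nat \<Rightarrow> 'k::field poly fract" where "W n i = Xf powi (ew n i)"

lemma W_nz: "W n i \<noteq> 0" by (simp add: W_def Xf_nz)

definition Hm :: "nat \<Rightarrow> 'k::field poly fract mat" where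
  "Hm n = mat n n (\<lambda>(i, j). if j = sg n i then inverse (W n i) else 0)"

lemma G_carrier: "Gmat n \<in> carrier_mat n n" by (simp add: Gmat_def)
lemma H_carrier: "Hm n \<in> carrier_mat n n" by (simp add: Hm_def)

lemma G_ent: assumes "3 \<le> n" "i < n" "j < n"
  shows "Gmat n $$ (i, j) = (if i = sg n j then W n j else 0)"
proof -
  have cj: "j + 2 < n \<or> j = n - 2 \<or> j = n - 1" using assms by linarith
  then show ?thesis using assms
    by (elim disjE; auto simp: Gmat_def sg_def ew_def W_def power_int_numeral)
qed

lemma sg_iff: "3 \<le> n \<Longrightarrow> i < n \<Longrightarrow> j < n \<Longrightarrow> (i = sg n j) = (j = tg n i)"
  using sg_tg tg_sg by metis

lemma G_ent': "3 \<le> n \<Longrightarrow> i < n \<Longrightarrow> j < n \<Longrightarrow>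
    Gmat n $$ (i, j) = (if j = tg n i then W n (tg n i) else 0)"
  using G_ent sg_iff by metis

lemma H_ent: "i < n \<Longrightarrow> j < n \<Longrightarrow> Hm n $$ (i, j) = (if j = sg n i then inverse (W n i) else 0)"
  by (simp add: Hm_def)

lemma H_ent': "3 \<le> n \<Longrightarrow> i < n \<Longrightarrow> j < n \<Longrightarrow>
    Hm n $$ (i, j) = (if i = tg n j then inverse (W n (tg n j)) else 0)"
  using H_ent sg_iff by metis

lemma GH: assumes "3 \<le> n" shows "Gmat n * Hm n = 1\<^sub>m n"
proof (rule eq_matI)
  fix i j assume ij: "i < dim_row (1\<^sub>m n :: 'k::field poly fract mat)" "j < dim_col (1\<^sub>m n :: 'k poly fract mat)"
  then have i: "i < n" and j: "j < n" by auto
  have "(Gmat n * Hm n) $$ (i, j) = W n (tg n i) * Hm n $$ (tg n i, j)"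
    by (rule mult_left_perm[OF G_carrier H_carrier i j tg_lt[OF assms i]])
       (simp add: G_ent'[OF assms i])
  also have "\<dots> = (if i = j then 1 else 0)"
    using assms i j by (auto simp: H_ent tg_lt sg_tg W_nz)
  finally show "(Gmat n * Hm n) $$ (i, j) = (1\<^sub>m n :: 'k::field poly fract mat) $$ (i, j)"
    using i j by simp
qed (auto simp: Gmat_def Hm_def)

lemma HG: assumes "3 \<le> n" shows "Hm n * Gmat n = 1\<^sub>m n"
proof (rule eq_matI)
  fix i j assume ij: "i < dim_row (1\<^sub>m n :: 'k::field poly fract mat)" "j < dim_col (1\<^sub>m n :: 'k poly fract mat)"
  then have i: "i < n" and j: "j < n" by auto
  have "(Hm n * Gmat n) $$ (i, j) = inverse (W n i) * Gmat n $$ (sg n i, j)"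
    by (rule mult_left_perm[OF H_carrier G_carrier i j sg_lt[OF assms i]])
       (simp add: H_ent i)
  also have "\<dots> = (if i = j then 1 else 0)"
    using assms i j by (auto simp: G_ent sg_lt W_nz sg_iff tg_sg)
  finally show "(Hm n * Gmat n) $$ (i, j) = (1\<^sub>m n :: 'k::field poly fract mat) $$ (i, j)"
    using i j by simp
qed (auto simp: Gmat_def Hm_def)

lemma Ginv_eq: assumes "3 \<le> n" shows "Ginv n = Hm n"
  unfolding Ginv_def
proof (rule the_equality)
  show "Hm n \<in> carrier_mat n n \<and> Gmat n * Hm n = 1\<^sub>m n \<and> Hm n * Gmat n = 1\<^sub>m n"
    using H_carrier GH[OF assms] HG[OF assms] by auto
next
  fix H assume h: "H \<in> carrier_mat n n \<and> Gmat n * H = 1\<^sub>m n \<and> H * Gmat n = 1\<^sub>m n"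
  have Hc: "H \<in> carrier_mat n n" using h by blast
  have "H = H * (Gmat n * Hm n)" using Hc by (simp add: GH[OF assms])
  also have "\<dots> = (H * Gmat n) * Hm n" by (rule assoc_mult_mat[symmetric, OF Hc G_carrier H_carrier])
  also have "\<dots> = Hm n" using h by (simp add: Hm_def)
  finally show "H = Hm n" .
qed

lemma conj_exp: "inverse (Xf powi a) * z * Xf powi b = Xf powi (b - a) * (z::'k::field poly fract)"
  by (simp add: power_int_diff Xf_nz field_simps)


lemma alpha_ent: assumes "3 \<le> n" "l \<in> carrier_mat n n" "i < n" "j < n"
  shows "alpha n l $$ (i, j) = Xf powi (ew n j - ew n i) * l $$ (sg n i, sg n j)"
proof -
  have HL: "Hm n * l \<in> carrier_mat n n" by (rule mult_carrier_mat[OF H_carrier assms(2)])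
  have "alpha n l $$ (i, j) = (Hm n * l) $$ (i, sg n j) * W n j"
    unfolding alpha_def Ginv_eq[OF assms(1)]
    by (rule mult_right_perm[OF HL G_carrier assms(3,4) sg_lt[OF assms(1,4)]])
       (simp add: G_ent[OF assms(1) _ assms(4)])
  also have "(Hm n * l) $$ (i, sg n j) = inverse (W n i) * l $$ (sg n i, sg n j)"
    by (rule mult_left_perm[OF H_carrier assms(2,3) sg_lt[OF assms(1,4)] sg_lt[OF assms(1,3)]])
       (simp add: H_ent assms(3))
  finally show ?thesis by (simp add: W_def conj_exp)
qed

definition beta :: "nat \<Rightarrow> 'k::field poly fract mat \<Rightarrow> 'k poly fract mat" where
  "beta n l = Gmat n * l * Hm n"

lemma beta_ent: assumes "3 \<le> n" "l \<in> carrier_mat n n" "i < n" "j < n"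
  shows "beta n l $$ (i, j) = Xf powi (ew n (tg n i) - ew n (tg n j)) * l $$ (tg n i, tg n j)"
proof -
  have GL: "Gmat n * l \<in> carrier_mat n n" by (rule mult_carrier_mat[OF G_carrier assms(2)])
  have "beta n l $$ (i, j) = (Gmat n * l) $$ (i, tg n j) * inverse (W n (tg n j))"
    unfolding beta_def
    by (rule mult_right_perm[OF GL H_carrier assms(3,4) tg_lt[OF assms(1,4)]])
       (simp add: H_ent'[OF assms(1) _ assms(4)])
  also have "(Gmat n * l) $$ (i, tg n j) = W n (tg n i) * l $$ (tg n i, tg n j)"
    by (rule mult_left_perm[OF G_carrier assms(2,3) tg_lt[OF assms(1,4)] tg_lt[OF assms(1,3)]])
       (simp add: G_ent'[OF assms(1) assms(3)])
  finally show ?thesis by (simp add: W_def conj_exp[of "ew n (tg n j)" _ 0, simplified] power_int_diff Xf_nz field_simps)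
qed

lemma fmap_ent: assumes "3 \<le> n" "m \<in> carrier_mat n n" "i < n" "j < n"
  shows "fmap n m $$ (i, j) = Xf powi (- ew n (tg n j)) * m $$ (i, tg n j)"
proof -
  have "fmap n m $$ (i, j) = m $$ (i, tg n j) * inverse (W n (tg n j))"
    unfolding fmap_def Ginv_eq[OF assms(1)]
    by (rule mult_right_perm[OF assms(2) H_carrier assms(3,4) tg_lt[OF assms(1,4)]])
       (simp add: H_ent'[OF assms(1) _ assms(4)])
  then show ?thesis by (simp add: W_def power_int_minus)
qed

lemma gmap_ent: assumes "3 \<le> n" "m \<in> carrier_mat n n" "i < n" "j < n"
  shows "(m * Gmat n) $$ (i, j) = Xf powi (ew n j) * m $$ (i, sg n j)"
proof -
  have "(m * Gmat n) $$ (i, j) = m $$ (i, sg n j) * W n j"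
    by (rule mult_right_perm[OF assms(2) G_carrier assms(3,4) sg_lt[OF assms(1,4)]])
       (simp add: G_ent[OF assms(1) _ assms(4)])
  then show ?thesis by (simp add: W_def)
qed

lemma DLam_iff: fixes Y :: "'k::field poly fract mat" assumes "3 \<le> n"
  shows "Y \<in> DLam n \<longleftrightarrow> Y \<in> carrier_mat n n \<and> (\<forall>i<n. \<forall>j<n. inS (- cexp n j i) (Y $$ (i, j)))"
proof
  assume Y: "Y \<in> DLam n"
  then have Yc: "Y \<in> carrier_mat n n" by (simp add: DLam_def)
  show "Y \<in> carrier_mat n n \<and> (\<forall>i<n. \<forall>j<n. inS (- cexp n j i) (Y $$ (i, j)))"
  proof (intro conjI Yc allI impI)
    fix i j assume i: "i < n" and j: "j < n"
    define X where "X = (Xf powi (cexp n j i) :: 'k poly fract)"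
    define E where "E = mat n n (\<lambda>(a, b). if a = j \<and> b = i then X else 0)"
    have Ec: "E \<in> carrier_mat n n" by (simp add: E_def)
    have EL: "E \<in> Lam n" unfolding Lam_iff
    proof (intro conjI Ec allI impI)
      fix a b
      assume ab: "a < n" "b < n"
      show "inS (cexp n a b) (E $$ (a, b))"
      proof (cases "a = j \<and> b = i")
        case True
        then show ?thesis using ab unfolding inS_def
          by (intro exI[of _ 1]) (simp add: E_def X_def embR_1)
      next
        case False
        then have "E $$ (a, b) = 0" using ab by (auto simp: E_def)
        then show ?thesis by (simp add: inS_0)
      qed
    qed
    have tr: "mat_trace (Y * E) = (\<Sum>a<n. (Y * E) $$ (a, a))"
      using Yc by (simp add: mat_trace_def)
    have ent: "(Y * E) $$ (a, a) = Y $$ (a, j) * (if a = i then X else 0)" if a: "a < n" for a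
      by (rule mult_right_perm[OF Yc Ec a a j]) (auto simp: E_def a)
    have "mat_trace (Y * E) = (\<Sum>a<n. if a = i then Y $$ (i, j) * X else 0)"
      unfolding tr by (rule sum.cong) (auto simp: ent)
    also have "\<dots> = Xf powi (cexp n j i) * Y $$ (i, j)" using i by (simp add: X_def)
    finally have "mat_trace (Y * E) = Xf powi (cexp n j i) * Y $$ (i, j)" .
    moreover have "mat_trace (Y * E) \<in> range embR" using Y EL by (simp add: DLam_def)
    ultimately have "inS (cexp n j i + - cexp n j i) (Xf powi (cexp n j i) * Y $$ (i, j))"
      by (simp add: inS_range)
    then show "inS (- cexp n j i) (Y $$ (i, j))" by (rule inS_unshift)
  qed
next
  assume Y: "Y \<in> carrier_mat n n \<and> (\<forall>i<n. \<forall>j<n. inS (- cexp n j i) (Y $$ (i, j)))"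
  show "Y \<in> DLam n" unfolding DLam_def
  proof (intro CollectI conjI ballI)
    show "Y \<in> carrier_mat n n" using Y by blast
    fix l :: "'k poly fract mat" assume l: "l \<in> Lam n"
    have lc: "l \<in> carrier_mat n n" using l Lam_iff by blast
    have Yc: "Y \<in> carrier_mat n n" using Y by blast
    have "mat_trace (Y * l) = (\<Sum>a<n. (Y * l) $$ (a, a))"
      using Yc by (simp add: mat_trace_def)
    also have "\<dots> = (\<Sum>a<n. \<Sum>k\<in>{0..<n}. Y $$ (a, k) * l $$ (k, a))"
      by (rule sum.cong) (use Yc lc in \<open>auto simp: scalar_prod_def\<close>)
    finally have "mat_trace (Y * l) = (\<Sum>a<n. \<Sum>k\<in>{0..<n}. Y $$ (a, k) * l $$ (k, a))" .
    moreover have "inS 0 (\<Sum>a<n. \<Sum>k\<in>{0..<n}. Y $$ (a, k) * l $$ (k, a))"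
    proof (intro inS_sum finite_lessThan finite_atLeastLessThan)
      fix a k assume a: "a \<in> {..<n}" and k: "k \<in> {0..<n}"
      have "inS (- cexp n k a + cexp n k a) (Y $$ (a, k) * l $$ (k, a))"
        using a k Y l Lam_iff by (intro inS_mult) auto
      then show "inS 0 (Y $$ (a, k) * l $$ (k, a))" by simp
    qed
    ultimately show "mat_trace (Y * l) \<in> range embR" by (simp add: inS_range)
  qed
qed


theorem proposition3p20:
  fixes n :: nat
  assumes "n \<ge> 3"
  defines "L \<equiv> (Lam n :: 'k::field poly fract mat set)"
  shows "Gmat n * Ginv n = (1\<^sub>m n :: 'k poly fract mat) \<and> Ginv n * Gmat n = (1\<^sub>m n :: 'k poly fract mat)
     \<and> bij_betw (alpha n) L L
     \<and> (\<forall>a\<in>L. \<forall>b\<in>L. alpha n (a * b) = alpha n a * alpha n b)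
     \<and> (\<forall>a\<in>L. \<forall>b\<in>L. alpha n (a + b) = alpha n a + alpha n b)
     \<and> bij_betw (fmap n) L (DLam n)
     \<and> (\<forall>m\<in>L. \<forall>m'\<in>L. fmap n (m + m') = fmap n m + fmap n m')
     \<and> (\<forall>r. \<forall>m\<in>L. fmap n (embR r \<cdot>\<^sub>m m) = embR r \<cdot>\<^sub>m fmap n m)
     \<and> (\<forall>a\<in>L. \<forall>m\<in>L. \<forall>b\<in>L. fmap n (a * m * alpha n b) = a * fmap n m * b)"
proof -
  have n: "3 \<le> n" using assms(1) by simp
  have Ge: "Ginv n = (Hm n :: 'k poly fract mat)" by (rule Ginv_eq[OF n])
  have GH': "Gmat n * Hm n = (1\<^sub>m n :: 'k poly fract mat)" by (rule GH[OF n])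
  have HG': "Hm n * Gmat n = (1\<^sub>m n :: 'k poly fract mat)" by (rule HG[OF n])
  have Gc: "(Gmat n :: 'k poly fract mat) \<in> carrier_mat n n" and Hc: "(Hm n :: 'k poly fract mat) \<in> carrier_mat n n"
    by (rule G_carrier, rule H_carrier)
  have as: "A * B * C = A * (B * C)" if "A \<in> carrier_mat n n" "B \<in> carrier_mat n n" "C \<in> carrier_mat n n"
    for A B C :: "'k poly fract mat" using that by simp
  have cl: "A * B \<in> carrier_mat n n" if "A \<in> carrier_mat n n" "B \<in> carrier_mat n n"
    for A B :: "'k poly fract mat" using that by simp
  have Lc: "x \<in> carrier_mat n n" if "x \<in> L" for x using that Lam_iff unfolding L_def by blast
  have alpha_eq: "alpha n x = Hm n * x * Gmat n" for x :: "'k poly fract mat"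
    by (simp add: alpha_def Ge)
  have fmap_eq: "fmap n x = x * Hm n" for x :: "'k poly fract mat"
    by (simp add: fmap_def Ge)
  have aL: "alpha n l \<in> L" if l: "l \<in> L" for l
  proof -
    have lc: "l \<in> carrier_mat n n" using Lc l .
    show ?thesis unfolding L_def Lam_iff
    proof (intro conjI allI impI)
      show "alpha n l \<in> carrier_mat n n" unfolding alpha_eq using Hc lc Gc by (metis mult_carrier_mat)
      fix i j assume i: "i < n" and j: "j < n"
      have "inS (cexp n (sg n i) (sg n j)) (l $$ (sg n i, sg n j))"
        using l sg_lt[OF n i] sg_lt[OF n j] unfolding L_def Lam_iff by blast
      moreover have "cexp n i j = (ew n j - ew n i) + cexp n (sg n i) (sg n j)"
        using cA[OF n i j] by linarith
      ultimately show "inS (cexp n i j) (alpha n l $$ (i, j))"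
        unfolding alpha_ent[OF n lc i j] by (rule inS_shift')
    qed
  qed
  have bL: "beta n l \<in> L" if l: "l \<in> L" for l
  proof -
    have lc: "l \<in> carrier_mat n n" using Lc l .
    show ?thesis unfolding L_def Lam_iff
    proof (intro conjI allI impI)
      show "beta n l \<in> carrier_mat n n" unfolding beta_def using Hc lc Gc by (metis mult_carrier_mat)
      fix i j assume i: "i < n" and j: "j < n"
      have "inS (cexp n (tg n i) (tg n j)) (l $$ (tg n i, tg n j))"
        using l tg_lt[OF n i] tg_lt[OF n j] unfolding L_def Lam_iff by blast
      moreover have "cexp n i j = (ew n (tg n i) - ew n (tg n j)) + cexp n (tg n i) (tg n j)"
        using cA[OF n tg_lt[OF n i] tg_lt[OF n j]] unfolding sg_tg[OF n i] sg_tg[OF n j] by linarith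
      ultimately show "inS (cexp n i j) (beta n l $$ (i, j))"
        unfolding beta_ent[OF n lc i j] by (rule inS_shift')
    qed
  qed
  have ab: "alpha n (beta n l) = l" if l: "l \<in> L" for l
  proof -
    have lc: "l \<in> carrier_mat n n" using Lc l .
    have "alpha n (beta n l) = (Hm n * Gmat n) * l * (Hm n * Gmat n)"
      unfolding alpha_eq beta_def using lc Gc Hc by (simp add: as cl)
    then show ?thesis using lc by (simp add: HG')
  qed
  have ba: "beta n (alpha n l) = l" if l: "l \<in> L" for l
  proof -
    have lc: "l \<in> carrier_mat n n" using Lc l .
    have "beta n (alpha n l) = (Gmat n * Hm n) * l * (Gmat n * Hm n)"
      unfolding alpha_eq beta_def using lc Gc Hc by (simp add: as cl)
    then show ?thesis using lc by (simp add: GH')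
  qed
  have bij1: "bij_betw (alpha n) L L"
    by (rule bij_betw_byWitness[where f' = "beta n"]) (use ab ba aL bL in auto)
  have mult1: "\<forall>a\<in>L. \<forall>b\<in>L. alpha n (a * b) = alpha n a * alpha n b"
  proof (intro ballI)
    fix a b assume a: "a \<in> L" and b: "b \<in> L"
    have ac: "a \<in> carrier_mat n n" and bc: "b \<in> carrier_mat n n" using Lc a b by auto
    have "alpha n a * alpha n b = Hm n * a * (Gmat n * Hm n) * b * Gmat n"
      unfolding alpha_eq using ac bc Gc Hc by (simp add: as cl)
    also have "\<dots> = alpha n (a * b)" unfolding alpha_eq GH' using ac bc Gc Hc by (simp add: as cl)
    finally show "alpha n (a * b) = alpha n a * alpha n b" by simp
  qed
  have add1: "\<forall>a\<in>L. \<forall>b\<in>L. alpha n (a + b) = alpha n a + alpha n b"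
  proof (intro ballI)
    fix a b assume a: "a \<in> L" and b: "b \<in> L"
    have ac: "a \<in> carrier_mat n n" and bc: "b \<in> carrier_mat n n" using Lc a b by auto
    have "Hm n * (a + b) = Hm n * a + Hm n * b" by (rule mult_add_distrib_mat[OF Hc ac bc])
    moreover have "(Hm n * a + Hm n * b) * Gmat n = Hm n * a * Gmat n + Hm n * b * Gmat n"
      by (rule add_mult_distrib_mat[OF _ _ Gc]) (use Hc ac bc in auto)
    ultimately show "alpha n (a + b) = alpha n a + alpha n b" unfolding alpha_eq by simp
  qed
  have fD: "fmap n m \<in> DLam n" if m: "m \<in> L" for m
  proof -
    have mc: "m \<in> carrier_mat n n" using Lc m .
    show ?thesis unfolding DLam_iff[OF n]
    proof (intro conjI allI impI)
      show "fmap n m \<in> carrier_mat n n" unfolding fmap_eq using Hc mc by (metis mult_carrier_mat)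
      fix i j assume i: "i < n" and j: "j < n"
      have "inS (cexp n i (tg n j)) (m $$ (i, tg n j))"
        using m tg_lt[OF n j] i unfolding L_def Lam_iff by blast
      moreover have "- cexp n j i = - ew n (tg n j) + cexp n i (tg n j)"
        using cF[OF n i j] by linarith
      ultimately show "inS (- cexp n j i) (fmap n m $$ (i, j))"
        unfolding fmap_ent[OF n mc i j] by (rule inS_shift')
    qed
  qed
  have gL: "Y * Gmat n \<in> L" if Y: "Y \<in> DLam n" for Y :: "'k poly fract mat"
  proof -
    have Yc: "Y \<in> carrier_mat n n" using Y DLam_iff[OF n] by blast
    show ?thesis unfolding L_def Lam_iff
    proof (intro conjI allI impI)
      show "Y * Gmat n \<in> carrier_mat n n" using Gc Yc by (metis mult_carrier_mat)
      fix i j assume i: "i < n" and j: "j < n"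
      have "inS (- cexp n (sg n j) i) (Y $$ (i, sg n j))"
        using Y sg_lt[OF n j] i unfolding DLam_iff[OF n] by blast
      moreover have "cexp n i j = ew n j + - cexp n (sg n j) i"
        using cF[OF n i sg_lt[OF n j]] unfolding tg_sg[OF n j] by linarith
      ultimately show "inS (cexp n i j) ((Y * Gmat n) $$ (i, j))"
        unfolding gmap_ent[OF n Yc i j] by (rule inS_shift')
    qed
  qed
  have fg: "fmap n (Y * Gmat n) = Y" if Y: "Y \<in> DLam n" for Y :: "'k poly fract mat"
  proof -
    have Yc: "Y \<in> carrier_mat n n" using Y DLam_iff[OF n] by blast
    have "fmap n (Y * Gmat n) = Y * (Gmat n * Hm n)" unfolding fmap_eq using Yc Gc Hc by (simp add: as cl)
    then show ?thesis using Yc by (simp add: GH')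
  qed
  have gf: "fmap n m * Gmat n = m" if m: "m \<in> L" for m
  proof -
    have mc: "m \<in> carrier_mat n n" using Lc m .
    have "fmap n m * Gmat n = m * (Hm n * Gmat n)" unfolding fmap_eq using mc Gc Hc by (simp add: as cl)
    then show ?thesis using mc by (simp add: HG')
  qed
  have bij2: "bij_betw (fmap n) L (DLam n)"
    by (rule bij_betw_byWitness[where f' = "\<lambda>Y. Y * Gmat n"]) (use fD gL fg gf in auto)
  have add2: "\<forall>m\<in>L. \<forall>m'\<in>L. fmap n (m + m') = fmap n m + fmap n m'"
  proof (intro ballI)
    fix a b assume a: "a \<in> L" and b: "b \<in> L"
    have ac: "a \<in> carrier_mat n n" and bc: "b \<in> carrier_mat n n" using Lc a b by auto
    show "fmap n (a + b) = fmap n a + fmap n b"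
      unfolding fmap_eq by (rule add_mult_distrib_mat[OF ac bc Hc])
  qed
  have sm: "\<forall>r. \<forall>m\<in>L. fmap n (embR r \<cdot>\<^sub>m m) = embR r \<cdot>\<^sub>m fmap n m"
  proof (intro allI ballI)
    fix r m assume m: "m \<in> L"
    have mc: "m \<in> carrier_mat n n" using Lc m .
    show "fmap n (embR r \<cdot>\<^sub>m m) = embR r \<cdot>\<^sub>m fmap n m"
      unfolding fmap_eq by (rule mult_smult_assoc_mat[OF mc Hc])
  qed
  have bim: "\<forall>a\<in>L. \<forall>m\<in>L. \<forall>b\<in>L. fmap n (a * m * alpha n b) = a * fmap n m * b"
  proof (intro ballI)
    fix a m b assume a: "a \<in> L" and m: "m \<in> L" and b: "b \<in> L"
    have ac: "a \<in> carrier_mat n n" and bc: "b \<in> carrier_mat n n" and mc: "m \<in> carrier_mat n n"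
      using Lc a b m by auto
    have "fmap n (a * m * alpha n b) = a * m * Hm n * b * (Gmat n * Hm n)"
      unfolding fmap_eq alpha_eq using ac bc mc Gc Hc by (simp add: as cl)
    also have "\<dots> = a * fmap n m * b" unfolding GH' fmap_eq using ac bc mc Hc by (simp add: as cl)
    finally show "fmap n (a * m * alpha n b) = a * fmap n m * b" .
  qed
  show ?thesis using Ge GH' HG' bij1 mult1 add1 bij2 add2 sm bim by simp
qed

end
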